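(* Let $n\ge1$ and let $\mathcal V$ be a variety with $n+2$ Gumm terms. Then $\mathcal V$ satisfies $$\alpha(\beta\circ\gamma\circ\beta\circ\gamma\circ\beta)\subseteq(\alpha\beta\circ_{4n-1}\alpha\gamma)\circ\alpha(\gamma\circ\beta)\circ(\alpha\gamma\circ_{2n}\alpha\beta),$$ and consequently $\mathcal V$ satisfies $\alpha(\beta\circ\alpha\gamma\circ\beta\circ\alpha\gamma\circ\beta)\subseteq\alpha\beta\circ_{6n+1}\alpha\gamma$.
   Context: Here $\alpha,\beta,\gamma$ range over congruences of algebras in $\mathcal V$. $\circ$ is relational composition, juxtaposition is intersection. For relations $X,Y$ and $m\ge1$, $X\circ_m Y$ denotes $X\circ Y\circ X\circ\cdots$ with $m$ factors. A variety has $n+2$ Gumm terms if it has ternary terms $p,j_1,\dots,j_{n+1}$ satisfying: $x=j_i(x,y,x)$ for all $i$; $x=p(x,z,z)$; $p(x,x,z)=j_1(x,x,z)$; $j_i(x,z,z)=j_{i+1}(x,z,z)$ for odd $i\le n$; $j_i(x,x,z)=j_{i+1}(x,x,z)$ for even $i\le n$; $j_{n+1}(x,y,z)=z$. *)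

theory Defs
  imports Main
begin

datatype 'f trm = Var nat | Fun 'f "'f trm list"

fun wf_trm :: "('f \<Rightarrow> nat) \<Rightarrow> 'f trm \<Rightarrow> bool" where
  "wf_trm ar (Var i) = True"
| "wf_trm ar (Fun f ts) = (length ts = ar f \<and> (\<forall>t\<in>set ts. wf_trm ar t))"

fun vars_trm :: "'f trm \<Rightarrow> nat set" where
  "vars_trm (Var i) = {i}"
| "vars_trm (Fun f ts) = (\<Union>t\<in>set ts. vars_trm t)"

type_synonym ('a, 'f) alg = "'a set \<times> ('f \<Rightarrow> 'a list \<Rightarrow> 'a)"

definition carrier :: "('a, 'f) alg \<Rightarrow> 'a set" where
  "carrier A = fst A"

definition op :: "('a, 'f) alg \<Rightarrow> 'f \<Rightarrow> 'a list \<Rightarrow> 'a" where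
  "op A = snd A"

definition algebra :: "('f \<Rightarrow> nat) \<Rightarrow> ('a, 'f) alg \<Rightarrow> bool" where
  "algebra ar A \<longleftrightarrow>
     (\<forall>f xs. length xs = ar f \<longrightarrow> set xs \<subseteq> carrier A \<longrightarrow> op A f xs \<in> carrier A)"

fun eval :: "('a, 'f) alg \<Rightarrow> (nat \<Rightarrow> 'a) \<Rightarrow> 'f trm \<Rightarrow> 'a" where
  "eval A \<rho> (Var i) = \<rho> i"
| "eval A \<rho> (Fun f ts) = op A f (map (eval A \<rho>) ts)"

definition satisfies :: "('a, 'f) alg \<Rightarrow> 'f trm \<Rightarrow> 'f trm \<Rightarrow> bool" where
  "satisfies A s t \<longleftrightarrow> (\<forall>\<rho>. range \<rho> \<subseteq> carrier A \<longrightarrow> eval A \<rho> s = eval A \<rho> t)"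

text \<open>A variety (of algebras of signature ar, with carriers in the type 'a) is an
  equational class: the class of all algebras satisfying a set E of identities (Birkhoff).\<close>

definition variety :: "('f \<Rightarrow> nat) \<Rightarrow> ('a, 'f) alg set \<Rightarrow> bool" where
  "variety ar V \<longleftrightarrow>
     (\<exists>E :: ('f trm \<times> 'f trm) set.
        (\<forall>(s,t)\<in>E. wf_trm ar s \<and> wf_trm ar t) \<and>
        V = {A. algebra ar A \<and> (\<forall>(s,t)\<in>E. satisfies A s t)})"

definition tern :: "('a, 'f) alg \<Rightarrow> 'f trm \<Rightarrow> 'a \<Rightarrow> 'a \<Rightarrow> 'a \<Rightarrow> 'a" where
  "tern A t a b c = eval A (\<lambda>i. if i = 0 then a else if i = 1 then b else c) t"

definition ternary_trm :: "('f \<Rightarrow> nat) \<Rightarrow> 'f trm \<Rightarrow> bool" where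
  "ternary_trm ar t \<longleftrightarrow> wf_trm ar t \<and> vars_trm t \<subseteq> {0, 1, 2}"

definition has_gumm_terms :: "('f \<Rightarrow> nat) \<Rightarrow> ('a, 'f) alg set \<Rightarrow> nat \<Rightarrow> bool" where
  "has_gumm_terms ar V n \<longleftrightarrow>
    (\<exists>p (j :: nat \<Rightarrow> 'f trm).
       ternary_trm ar p \<and> (\<forall>i\<in>{1..n+1}. ternary_trm ar (j i)) \<and>
       (\<forall>A\<in>V. \<forall>x\<in>carrier A. \<forall>y\<in>carrier A. \<forall>z\<in>carrier A.
          (\<forall>i\<in>{1..n+1}. tern A (j i) x y x = x) \<and>
          tern A p x z z = x \<and>
          tern A p x x z = tern A (j 1) x x z \<and>
          (\<forall>i\<in>{1..n}. odd i \<longrightarrow> tern A (j i) x z z = tern A (j (i+1)) x z z) \<and>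
          (\<forall>i\<in>{1..n}. even i \<longrightarrow> tern A (j i) x x z = tern A (j (i+1)) x x z) \<and>
          tern A (j (n+1)) x y z = z))"

definition congruence :: "('f \<Rightarrow> nat) \<Rightarrow> ('a, 'f) alg \<Rightarrow> 'a rel \<Rightarrow> bool" where
  "congruence ar A \<theta> \<longleftrightarrow>
     equiv (carrier A) \<theta> \<and>
     (\<forall>f xs ys. length xs = ar f \<longrightarrow> length ys = ar f \<longrightarrow>
        set xs \<subseteq> carrier A \<longrightarrow> set ys \<subseteq> carrier A \<longrightarrow>
        list_all2 (\<lambda>a b. (a, b) \<in> \<theta>) xs ys \<longrightarrow> (op A f xs, op A f ys) \<in> \<theta>)"

fun alt_comp :: "'a rel \<Rightarrow> 'a rel \<Rightarrow> nat \<Rightarrow> 'a rel" where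
  "alt_comp X Y 0 = Id"
| "alt_comp X Y (Suc 0) = X"
| "alt_comp X Y (Suc (Suc k)) = X O alt_comp Y X (Suc k)"

end

theory Submission
  imports Defs
begin

definition walk :: "'a rel \<Rightarrow> 'a rel \<Rightarrow> nat \<Rightarrow> 'a \<Rightarrow> 'a \<Rightarrow> bool" where
  "walk X Y k s t \<longleftrightarrow> (\<exists>z. z 0 = s \<and> z k = t \<and> (\<forall>i<k. (z i, z (Suc i)) \<in> (if even i then X else Y)))"

lemma walk0: "walk X Y 0 s s"
  unfolding walk_def by (rule exI[of _ "\<lambda>_. s"]) simp

lemma walk_snoc:
  assumes "walk X Y k s t" and "(t,u) \<in> (if even k then X else Y)"
  shows "walk X Y (Suc k) s u"
proof -
  obtain z where z: "z 0 = s" "z k = t" "\<forall>i<k. (z i, z (Suc i)) \<in> (if even i then X else Y)"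
    using assms(1) unfolding walk_def by blast
  define z' where "z' = z(Suc k := u)"
  have "z' 0 = s" using z by (simp add: z'_def)
  moreover have "z' (Suc k) = u" by (simp add: z'_def)
  moreover have "\<forall>i<Suc k. (z' i, z' (Suc i)) \<in> (if even i then X else Y)"
  proof (intro allI impI)
    fix i assume "i < Suc k"
    then consider "i < k" | "i = k" by linarith
    then show "(z' i, z' (Suc i)) \<in> (if even i then X else Y)"
    proof cases
      case 1 then show ?thesis using z by (simp add: z'_def)
    next
      case 2 then show ?thesis using z assms(2) by (simp add: z'_def)
    qed
  qed
  ultimately show ?thesis unfolding walk_def by blast
qed

lemma walk_unsnoc:
  assumes "walk X Y (Suc l) t u"
  shows "\<exists>w. walk X Y l t w \<and> (w,u) \<in> (if even l then X else Y)"
proof -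
  obtain z where z: "z 0 = t" "z (Suc l) = u" "\<forall>i<Suc l. (z i, z (Suc i)) \<in> (if even i then X else Y)"
    using assms unfolding walk_def by blast
  have "walk X Y l t (z l)" unfolding walk_def using z by (intro exI[of _ z]) auto
  moreover have "(z l, u) \<in> (if even l then X else Y)" using z by auto
  ultimately show ?thesis by blast
qed

lemma walk_concat:
  assumes "walk X Y k s t"
  shows "walk (if even k then X else Y) (if even k then Y else X) l t u \<Longrightarrow> walk X Y (k+l) s u"
proof (induction l arbitrary: u)
  case 0
  then have "t = u" unfolding walk_def by auto
  then show ?case using assms by simp
next
  case (Suc l)
  obtain w where w: "walk (if even k then X else Y) (if even k then Y else X) l t w"
    "(w,u) \<in> (if even l then (if even k then X else Y) else (if even k then Y else X))"
    using walk_unsnoc[OF Suc.prems] by blast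
  have "walk X Y (k+l) s w" using Suc.IH[OF w(1)] .
  moreover have "(w,u) \<in> (if even (k+l) then X else Y)" using w(2) by (auto split: if_splits)
  ultimately show ?case using walk_snoc by fastforce
qed

lemma walk1: "(s,u)\<in>X \<Longrightarrow> walk X Y 1 s u"
  unfolding walk_def by (rule exI[of _ "\<lambda>i. [s,u]!i"]) auto

lemma walk2: "(s,p)\<in>X \<Longrightarrow> (p,u)\<in>Y \<Longrightarrow> walk X Y 2 s u"
  unfolding walk_def by (rule exI[of _ "\<lambda>i. [s,p,u]!i"]) (auto simp: less_Suc_eq numeral_eq_Suc)


lemma walk4: "(s,p1)\<in>X \<Longrightarrow> (p1,p2)\<in>Y \<Longrightarrow> (p2,p3)\<in>X \<Longrightarrow> (p3,u)\<in>Y \<Longrightarrow> walk X Y 4 s u"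
  using walk_concat[OF walk2[of s p1 X p2 Y], of 2 u] walk2[of p2 p3 X u Y] by simp

lemma walk_alt: "walk X Y k s t \<Longrightarrow> (s,t) \<in> alt_comp X Y k"
proof (induction X Y k arbitrary: s t rule: alt_comp.induct)
  case (1 X Y)
  then show ?case unfolding walk_def by auto
next
  case (2 X Y)
  then show ?case unfolding walk_def by auto
next
  case (3 X Y k)
  obtain z where z: "z 0 = s" "z (Suc (Suc k)) = t" "\<forall>i<Suc (Suc k). (z i, z (Suc i)) \<in> (if even i then X else Y)"
    using 3(2) unfolding walk_def by blast
  have "walk Y X (Suc k) (z 1) t"
    unfolding walk_def
  proof (intro exI[of _ "\<lambda>i. z (Suc i)"] conjI allI impI)
    fix i assume "i < Suc k"
    then have "(z (Suc i), z (Suc (Suc i))) \<in> (if even (Suc i) then X else Y)" using z(3) by auto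
    then show "(z (Suc i), z (Suc (Suc i))) \<in> (if even i then Y else X)" by auto
  qed (use z in auto)
  then have "(z 1, t) \<in> alt_comp Y X (Suc k)" using 3(1) by blast
  moreover have "(s, z 1) \<in> X" using z by (metis One_nat_def even_zero zero_less_Suc)
  ultimately show ?case by auto
qed

definition compat3 :: "('a \<Rightarrow> 'a \<Rightarrow> 'a \<Rightarrow> 'a) \<Rightarrow> 'a rel \<Rightarrow> bool" where
  "compat3 F \<theta> \<longleftrightarrow> (\<forall>x x' y y' z z'. (x,x')\<in>\<theta> \<longrightarrow> (y,y')\<in>\<theta> \<longrightarrow> (z,z')\<in>\<theta> \<longrightarrow> (F x y z, F x' y' z') \<in> \<theta>)"

definition cg :: "'a set \<Rightarrow> ('a \<Rightarrow> 'a \<Rightarrow> 'a \<Rightarrow> 'a) \<Rightarrow> (nat \<Rightarrow> 'a \<Rightarrow> 'a \<Rightarrow> 'a \<Rightarrow> 'a) \<Rightarrow> nat \<Rightarrow> 'a rel \<Rightarrow> bool" where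
  "cg C P J n \<theta> \<longleftrightarrow> \<theta> \<subseteq> C \<times> C \<and> (\<forall>x\<in>C. (x,x)\<in>\<theta>) \<and> sym \<theta> \<and> trans \<theta> \<and> compat3 P \<theta> \<and> (\<forall>i\<in>{1..n+1}. compat3 (J i) \<theta>)"

lemma cg_sub: "cg C P J n \<theta> \<Longrightarrow> (x,y)\<in>\<theta> \<Longrightarrow> x\<in>C \<and> y\<in>C"
  unfolding cg_def by blast
lemma cg_refl: "cg C P J n \<theta> \<Longrightarrow> x\<in>C \<Longrightarrow> (x,x)\<in>\<theta>"
  unfolding cg_def by blast
lemma cg_sym: "cg C P J n \<theta> \<Longrightarrow> (x,y)\<in>\<theta> \<Longrightarrow> (y,x)\<in>\<theta>"
  unfolding cg_def by (meson symD)
lemma cg_trans: "cg C P J n \<theta> \<Longrightarrow> (x,y)\<in>\<theta> \<Longrightarrow> (y,z)\<in>\<theta> \<Longrightarrow> (x,z)\<in>\<theta>"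
  unfolding cg_def by (meson transD)
lemma cg_P: "cg C P J n \<theta> \<Longrightarrow> (x,x')\<in>\<theta> \<Longrightarrow> (y,y')\<in>\<theta> \<Longrightarrow> (z,z')\<in>\<theta> \<Longrightarrow> (P x y z, P x' y' z')\<in>\<theta>"
  unfolding cg_def compat3_def by blast
lemma cg_J: "cg C P J n \<theta> \<Longrightarrow> i\<in>{1..n+1} \<Longrightarrow> (x,x')\<in>\<theta> \<Longrightarrow> (y,y')\<in>\<theta> \<Longrightarrow> (z,z')\<in>\<theta> \<Longrightarrow> (J i x y z, J i x' y' z')\<in>\<theta>"
  unfolding cg_def compat3_def by blast
lemma cg_inter: "cg C P J n \<theta> \<Longrightarrow> cg C P J n \<eta> \<Longrightarrow> cg C P J n (\<theta>\<inter>\<eta>)"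
  unfolding cg_def compat3_def by (auto intro: sym_Int trans_Int)

lemma chain_main:
  fixes C :: "'a set" and P :: "'a \<Rightarrow> 'a \<Rightarrow> 'a \<Rightarrow> 'a" and J :: "nat \<Rightarrow> 'a \<Rightarrow> 'a \<Rightarrow> 'a \<Rightarrow> 'a"
  assumes n1: "1 \<le> n"
    and cP: "\<And>x y z. x\<in>C \<Longrightarrow> y\<in>C \<Longrightarrow> z\<in>C \<Longrightarrow> P x y z \<in> C"
    and cJ: "\<And>i x y z. i\<in>{1..n+1} \<Longrightarrow> x\<in>C \<Longrightarrow> y\<in>C \<Longrightarrow> z\<in>C \<Longrightarrow> J i x y z \<in> C"
    and jxyx: "\<And>i x y. i\<in>{1..n+1} \<Longrightarrow> x\<in>C \<Longrightarrow> y\<in>C \<Longrightarrow> J i x y x = x"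
    and pxzz: "\<And>x z. x\<in>C \<Longrightarrow> z\<in>C \<Longrightarrow> P x z z = x"
    and pxxz: "\<And>x z. x\<in>C \<Longrightarrow> z\<in>C \<Longrightarrow> P x x z = J 1 x x z"
    and jodd: "\<And>i x z. i\<in>{1..n} \<Longrightarrow> odd i \<Longrightarrow> x\<in>C \<Longrightarrow> z\<in>C \<Longrightarrow> J i x z z = J (i+1) x z z"
    and jeven: "\<And>i x z. i\<in>{1..n} \<Longrightarrow> even i \<Longrightarrow> x\<in>C \<Longrightarrow> z\<in>C \<Longrightarrow> J i x x z = J (i+1) x x z"
    and jlast: "\<And>x y z. x\<in>C \<Longrightarrow> y\<in>C \<Longrightarrow> z\<in>C \<Longrightarrow> J (n+1) x y z = z"
    and A: "cg C P J n al" and B: "cg C P J n be" and G: "cg C P J n ga"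
    and af: "(a,f) \<in> al" and ab: "(a,b)\<in>be" and bc: "(b,c)\<in>ga" and cd: "(c,d)\<in>be"
    and de: "(d,e)\<in>ga" and ef: "(e,f)\<in>be"
  shows "\<exists>m t. walk (al\<inter>be) (al\<inter>ga) (4*n-1) a m \<and> (m,t) \<in> al \<inter> (ga O be)
                \<and> walk (al\<inter>ga) (al\<inter>be) (2*n) t f"
proof -
  have Ca: "a\<in>C" and Cb: "b\<in>C" and Cc: "c\<in>C" and Cd: "d\<in>C" and Ce: "e\<in>C" and Cf: "f\<in>C"
    using cg_sub[OF B ab] cg_sub[OF B cd] cg_sub[OF B ef] by auto
  note rA = cg_refl[OF A] and rB = cg_refl[OF B] and rG = cg_refl[OF G]
  note sA = cg_sym[OF A] and sB = cg_sym[OF B] and sG = cg_sym[OF G]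
  note tA = cg_trans[OF A] and tB = cg_trans[OF B] and tG = cg_trans[OF G]
  note JA = cg_J[OF A] and JB = cg_J[OF B] and JG = cg_J[OF G]
  note PA = cg_P[OF A] and PB = cg_P[OF B] and PG = cg_P[OF G]
  have fa: "(f,a)\<in>al" using sA[OF af] .
  have ba: "(b,a)\<in>be" and cb: "(c,b)\<in>ga" and dc: "(d,c)\<in>be" and ed: "(e,d)\<in>ga" and fe: "(f,e)\<in>be"
    using sB sG ab bc cd de ef by auto
  have jfal: "(J k f x a, f) \<in> al" if "k\<in>{1..n+1}" "x\<in>C" for k x
  proof -
    have "(J k f x a, J k f x f) \<in> al" using JA[OF that(1) rA[OF Cf] rA[OF that(2)] af] .
    then show ?thesis using jxyx[OF that(1) Cf that(2)] by simp
  qed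
  have alf: "(u,w)\<in>al" if "(u,f)\<in>al" "(w,f)\<in>al" for u w
    using tA[OF that(1) sA[OF that(2)]] .
  define S where "S i = J i f (if odd i then b else e) a" for i
  have S_al: "(S i, f) \<in> al" if "i\<in>{1..n+1}" for i
    unfolding S_def using jfal[OF that] Cb Ce by auto
  have start: "(a, S n) \<in> al \<inter> be"
  proof (cases "odd n")
    case True
    have "J n f a a = J (n+1) f a a" using jodd[of n f a] n1 True Ca Cf by auto
    also have "\<dots> = a" using jlast Ca Cf by auto
    finally have eq: "J n f a a = a" .
    have "(J n f a a, J n f b a) \<in> be" using JB[of n] n1 rB[OF Cf] ab rB[OF Ca] by auto
    then have "(a, S n) \<in> be" using eq True by (simp add: S_def)
    moreover have "(a, S n) \<in> al" using alf[OF af S_al[of n]] n1 by auto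
    ultimately show ?thesis by blast
  next
    case False
    have "J n f f a = J (n+1) f f a" using jeven[of n f a] n1 False Ca Cf by auto
    also have "\<dots> = a" using jlast Ca Cf by auto
    finally have eq: "J n f f a = a" .
    have "(J n f f a, J n f e a) \<in> be" using JB[of n] n1 rB[OF Cf] fe rB[OF Ca] by auto
    then have "(a, S n) \<in> be" using eq False by (simp add: S_def)
    moreover have "(a, S n) \<in> al" using alf[OF af S_al[of n]] n1 by auto
    ultimately show ?thesis by blast
  qed
  have seg: "walk (al\<inter>ga) (al\<inter>be) 4 (S i) (S (i-1))" if i2: "2 \<le> i" and "i \<le> n" for i
  proof -
    have i1: "i\<in>{1..n+1}" and im: "i-1\<in>{1..n+1}" and im': "i-1 \<in> {1..n}" and ii: "i-1+1 = i"
      using that by auto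
    show ?thesis
    proof (cases "odd i")
      case True
      have eS: "S i = J i f b a" and eS': "S (i-1) = J (i-1) f e a" using True i2 by (auto simp: S_def)
      have s1: "(J i f b a, J i f c a) \<in> al\<inter>ga"
        using JG[OF i1 rG[OF Cf] bc rG[OF Ca]] alf[OF jfal[OF i1 Cb] jfal[OF i1 Cc]] by blast
      have s2: "(J i f c a, J i f d a) \<in> al\<inter>be"
        using JB[OF i1 rB[OF Cf] cd rB[OF Ca]] alf[OF jfal[OF i1 Cc] jfal[OF i1 Cd]] by blast
      have s3: "(J i f d a, J i f e a) \<in> al\<inter>ga"
        using JG[OF i1 rG[OF Cf] de rG[OF Ca]] alf[OF jfal[OF i1 Cd] jfal[OF i1 Ce]] by blast
      have ev: "even (i-1)" using True i2 by auto
      have jj: "J (i-1) f f a = J i f f a" using jeven[OF im' ev Cf Ca] ii by simp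
      have "(J i f e a, J i f f a) \<in> be" using JB[OF i1 rB[OF Cf] ef rB[OF Ca]] .
      moreover have "(J (i-1) f f a, J (i-1) f e a) \<in> be" using JB[OF im rB[OF Cf] fe rB[OF Ca]] .
      ultimately have "(J i f e a, J (i-1) f e a) \<in> be" using jj tB by metis
      then have s4: "(J i f e a, J (i-1) f e a) \<in> al\<inter>be"
        using alf[OF jfal[OF i1 Ce] jfal[OF im Ce]] by blast
      have "walk (al\<inter>ga) (al\<inter>be) 4 (J i f b a) (J (i-1) f e a)"
        using walk4[OF s1 s2 s3 s4] .
      then show ?thesis using eS eS' by simp
    next
      case False
      have eS: "S i = J i f e a" and eS': "S (i-1) = J (i-1) f b a" using False i2 by (auto simp: S_def)
      have s1: "(J i f e a, J i f d a) \<in> al\<inter>ga"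
        using JG[OF i1 rG[OF Cf] ed rG[OF Ca]] alf[OF jfal[OF i1 Ce] jfal[OF i1 Cd]] by blast
      have s2: "(J i f d a, J i f c a) \<in> al\<inter>be"
        using JB[OF i1 rB[OF Cf] dc rB[OF Ca]] alf[OF jfal[OF i1 Cd] jfal[OF i1 Cc]] by blast
      have s3: "(J i f c a, J i f b a) \<in> al\<inter>ga"
        using JG[OF i1 rG[OF Cf] cb rG[OF Ca]] alf[OF jfal[OF i1 Cc] jfal[OF i1 Cb]] by blast
      have od: "odd (i-1)" using False i2 by auto
      have jj: "J (i-1) f a a = J i f a a" using jodd[OF im' od Cf Ca] ii by simp
      have "(J i f b a, J i f a a) \<in> be" using JB[OF i1 rB[OF Cf] ba rB[OF Ca]] .
      moreover have "(J (i-1) f a a, J (i-1) f b a) \<in> be" using JB[OF im rB[OF Cf] ab rB[OF Ca]] .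
      ultimately have "(J i f b a, J (i-1) f b a) \<in> be" using jj tB by metis
      then have s4: "(J i f b a, J (i-1) f b a) \<in> al\<inter>be"
        using alf[OF jfal[OF i1 Cb] jfal[OF im Cb]] by blast
      have "walk (al\<inter>ga) (al\<inter>be) 4 (J i f e a) (J (i-1) f b a)"
        using walk4[OF s1 s2 s3 s4] .
      then show ?thesis using eS eS' by simp
    qed
  qed
  have L: "walk (al\<inter>be) (al\<inter>ga) (4*r+1) a (S (n-r))" if "r < n" for r
    using that
  proof (induction r)
    case 0
    then show ?case using walk_snoc[OF walk0[of "al\<inter>be" "al\<inter>ga" a] ] start by simp
  next
    case (Suc r)
    have w1: "walk (al\<inter>be) (al\<inter>ga) (4*r+1) a (S (n-r))" using Suc by simp
    have sw: "walk (al\<inter>ga) (al\<inter>be) 4 (S (n-r)) (S (n-r-1))" using seg[of "n-r"] Suc.prems by simp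
    have e: "(if even (4*r+1) then al\<inter>be else al\<inter>ga) = al\<inter>ga"
       "(if even (4*r+1) then al\<inter>ga else al\<inter>be) = al\<inter>be" by simp_all
    have "walk (al\<inter>be) (al\<inter>ga) (4*r+1+4) a (S (n-r-1))"
      by (rule walk_concat[OF w1]) (simp only: e sw)
    moreover have "4*r+1+4 = 4*Suc r+1" "n-r-1 = n - Suc r" by simp_all
    ultimately show ?case by metis
  qed
  define m where "m = J 1 f c a"
  have i11: "(1::nat)\<in>{1..n+1}" using n1 by auto
  have Cm: "m\<in>C" unfolding m_def using cJ[OF i11 Cf Cc Ca] .
  have mf: "(m,f)\<in>al" unfolding m_def using jfal[OF i11 Cc] .
  have mf': "(f,m)\<in>al" using sA[OF mf] .
  have wl0: "walk (al\<inter>be) (al\<inter>ga) (4*(n-1)+1) a (S 1)" using L[of "n-1"] n1 by simp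
  have S1: "S 1 = J 1 f b a" by (simp add: S_def)
  have st1: "(J 1 f b a, m) \<in> ga" unfolding m_def using JG[OF i11 rG[OF Cf] bc rG[OF Ca]] .
  have st2: "(J 1 f b a, m) \<in> al" using alf[OF jfal[OF i11 Cb] mf] .
  have st: "(S 1, m) \<in> al\<inter>ga" unfolding S1 using st1 st2 by blast
  have wl1: "walk (al\<inter>be) (al\<inter>ga) (Suc (4*(n-1)+1)) a m"
    by (rule walk_snoc[OF wl0]) (use st in simp)
  have wl2: "walk (al\<inter>be) (al\<inter>ga) (Suc (Suc (4*(n-1)+1))) a m"
    by (rule walk_snoc[OF wl1]) (simp add: rA[OF Cm] rB[OF Cm])
  have e4: "Suc (Suc (4*(n-1)+1)) = 4*n-1" using n1 by simp
  have wl: "walk (al\<inter>be) (al\<inter>ga) (4*n-1) a m" using wl2 e4 by metis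
  define u where "u = J 1 e d b"
  define v where "v = P e d c"
  have Cu: "u\<in>C" unfolding u_def using cJ[OF i11 Ce Cd Cb] .
  have Cv: "v\<in>C" unfolding v_def using cP[OF Ce Cd Cc] .
  have mu: "(m,u)\<in>be" unfolding m_def u_def using JB[OF i11 fe cd ab] .
  have "(u, J 1 d d c)\<in>ga" unfolding u_def using JG[OF i11 ed rG[OF Cd] bc] .
  moreover have "J 1 d d c = P d d c" using pxxz[OF Cd Cc] by simp
  moreover have "(P d d c, v)\<in>ga" unfolding v_def using PG[OF de rG[OF Cd] rG[OF Cc]] .
  ultimately have uv: "(u,v)\<in>ga" using tG by metis
  have "(v, P f d d)\<in>be" unfolding v_def using PB[OF ef rB[OF Cd] cd] .
  then have vf: "(v,f)\<in>be" using pxzz[OF Cf Cd] by simp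
  have um: "(u,m)\<in>be" using sB[OF mu] .
  have vu: "(v,u)\<in>ga" using sG[OF uv] .
  have fv: "(f,v)\<in>be" using sB[OF vf] .
  have jmal: "(J k m w f, m) \<in> al" if "k\<in>{1..n+1}" "w\<in>C" for k w
  proof -
    have "(J k m w f, J k m w m) \<in> al" using JA[OF that(1) rA[OF Cm] rA[OF that(2)] mf'] .
    then show ?thesis using jxyx[OF that(1) Cm that(2)] by simp
  qed
  have alm: "(x,y)\<in>al" if "(x,m)\<in>al" "(y,m)\<in>al" for x y
    using tA[OF that(1) sA[OF that(2)]] .
  define t where "t = J 1 m u f"
  have tm: "(t,m)\<in>al" unfolding t_def using jmal[OF i11 Cu] .
  have mid: "(m,t) \<in> al \<inter> (ga O be)"
  proof -
    have "(P m v v, P m u v) \<in> ga" using PG[OF rG[OF Cm] vu rG[OF Cv]] .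
    then have g1: "(m, P m u v) \<in> ga" using pxzz[OF Cm Cv] by simp
    have "(P m u v, P m m f) \<in> be" using PB[OF rB[OF Cm] um vf] .
    moreover have "P m m f = J 1 m m f" using pxxz[OF Cm Cf] .
    moreover have "(J 1 m m f, t) \<in> be" unfolding t_def using JB[OF i11 rB[OF Cm] mu rB[OF Cf]] .
    ultimately have "(P m u v, t) \<in> be" using tB by metis
    then show ?thesis using g1 sA[OF tm] by blast
  qed
  define U where "U i = J i m (if odd i then u else v) f" for i
  have U1: "U 1 = t" by (simp add: U_def t_def)
  have Ulast: "U (n+1) = f" unfolding U_def using jlast[OF Cm _ Cf] Cu Cv by auto
  have Ual: "(U i, m) \<in> al" if "i\<in>{1..n+1}" for i
    unfolding U_def using jmal[OF that] Cu Cv by auto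
  have rseg: "walk (al\<inter>ga) (al\<inter>be) 2 (U i) (U (i+1))" if "i\<in>{1..n}" for i
  proof -
    have i1: "i\<in>{1..n+1}" and i2: "i+1\<in>{1..n+1}" using that by auto
    show ?thesis
    proof (cases "odd i")
      case True
      have eU: "U i = J i m u f" "U (i+1) = J (i+1) m v f" using True by (auto simp: U_def)
      have s1: "(J i m u f, J i m v f) \<in> al\<inter>ga"
        using JG[OF i1 rG[OF Cm] uv rG[OF Cf]] alm[OF jmal[OF i1 Cu] jmal[OF i1 Cv]] by blast
      have "(J i m v f, J i m f f) \<in> be" using JB[OF i1 rB[OF Cm] vf rB[OF Cf]] .
      moreover have "J i m f f = J (i+1) m f f" using jodd[OF that True Cm Cf] .
      moreover have "(J (i+1) m f f, J (i+1) m v f) \<in> be" using JB[OF i2 rB[OF Cm] fv rB[OF Cf]] .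
      ultimately have "(J i m v f, J (i+1) m v f) \<in> be" using tB by metis
      then have s2: "(J i m v f, J (i+1) m v f) \<in> al\<inter>be"
        using alm[OF jmal[OF i1 Cv] jmal[OF i2 Cv]] by blast
      show ?thesis using walk2[OF s1 s2] eU by simp
    next
      case False
      have eU: "U i = J i m v f" "U (i+1) = J (i+1) m u f" using False by (auto simp: U_def)
      have s1: "(J i m v f, J i m u f) \<in> al\<inter>ga"
        using JG[OF i1 rG[OF Cm] vu rG[OF Cf]] alm[OF jmal[OF i1 Cv] jmal[OF i1 Cu]] by blast
      have "(J i m u f, J i m m f) \<in> be" using JB[OF i1 rB[OF Cm] um rB[OF Cf]] .
      moreover have "J i m m f = J (i+1) m m f" using jeven[OF that _ Cm Cf] False by simp
      moreover have "(J (i+1) m m f, J (i+1) m u f) \<in> be" using JB[OF i2 rB[OF Cm] mu rB[OF Cf]] .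
      ultimately have "(J i m u f, J (i+1) m u f) \<in> be" using tB by metis
      then have s2: "(J i m u f, J (i+1) m u f) \<in> al\<inter>be"
        using alm[OF jmal[OF i1 Cu] jmal[OF i2 Cu]] by blast
      show ?thesis using walk2[OF s1 s2] eU by simp
    qed
  qed
  have R: "walk (al\<inter>ga) (al\<inter>be) (2*k) (U 1) (U (k+1))" if "k \<le> n" for k
    using that
  proof (induction k)
    case 0
    then show ?case using walk0 by simp
  next
    case (Suc k)
    have w1: "walk (al\<inter>ga) (al\<inter>be) (2*k) (U 1) (U (k+1))" using Suc by simp
    have sw: "walk (al\<inter>ga) (al\<inter>be) 2 (U (k+1)) (U (k+1+1))" using rseg[of "k+1"] Suc.prems by simp
    have e: "(if even (2*k) then al\<inter>ga else al\<inter>be) = al\<inter>ga"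
       "(if even (2*k) then al\<inter>be else al\<inter>ga) = al\<inter>be" by simp_all
    have "walk (al\<inter>ga) (al\<inter>be) (2*k+2) (U 1) (U (k+1+1))"
      by (rule walk_concat[OF w1]) (simp only: e sw)
    moreover have "2*k+2 = 2*Suc k" "k+1+1 = Suc k + 1" by simp_all
    ultimately show ?case by metis
  qed
  have wr: "walk (al\<inter>ga) (al\<inter>be) (2*n) t f" using R[of n] U1 Ulast by simp
  show ?thesis using wl mid wr by blast
qed


lemma eval_closed:
  assumes alg: "algebra ar A"
  shows "wf_trm ar t \<Longrightarrow> (\<forall>i\<in>vars_trm t. \<rho> i \<in> carrier A) \<Longrightarrow> eval A \<rho> t \<in> carrier A"
proof (induction t)
  case (Var i)
  then show ?case by simp
next
  case (Fun g ts)
  have "length (map (eval A \<rho>) ts) = ar g" using Fun.prems by simp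
  moreover have "set (map (eval A \<rho>) ts) \<subseteq> carrier A" using Fun by auto
  ultimately show ?case using alg unfolding algebra_def by simp
qed

lemma list_all2_mapI: "(\<forall>x\<in>set xs. (f x, g x) \<in> \<theta>) \<Longrightarrow> list_all2 (\<lambda>a b. (a,b)\<in>\<theta>) (map f xs) (map g xs)"
  by (induction xs) auto

lemma eval_cong:
  assumes cg: "congruence ar A \<theta>"
  shows "wf_trm ar t \<Longrightarrow> (\<forall>i\<in>vars_trm t. (\<rho> i, \<rho>' i) \<in> \<theta>) \<Longrightarrow> (eval A \<rho> t, eval A \<rho>' t) \<in> \<theta>"
proof (induction t)
  case (Var i)
  then show ?case by simp
next
  case (Fun g ts)
  have sub: "\<theta> \<subseteq> carrier A \<times> carrier A" using cg unfolding congruence_def equiv_def by blast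
  have rel: "\<forall>t\<in>set ts. (eval A \<rho> t, eval A \<rho>' t) \<in> \<theta>" using Fun by auto
  have "list_all2 (\<lambda>a b. (a, b) \<in> \<theta>) (map (eval A \<rho>) ts) (map (eval A \<rho>') ts)"
    using list_all2_mapI[OF rel] .
  moreover have "set (map (eval A \<rho>) ts) \<subseteq> carrier A" "set (map (eval A \<rho>') ts) \<subseteq> carrier A"
    using rel sub by auto
  moreover have "length (map (eval A \<rho>) ts) = ar g" "length (map (eval A \<rho>') ts) = ar g"
    using Fun.prems by auto
  ultimately show ?case using cg unfolding congruence_def by simp
qed

lemma cong_cg:
  assumes alg: "algebra ar A" and cg: "congruence ar A \<theta>"
    and tp: "ternary_trm ar p" and tj: "\<forall>i\<in>{1..n+1}. ternary_trm ar (j i)"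
  shows "cg (carrier A) (tern A p) (\<lambda>i. tern A (j i)) n \<theta>"
proof -
  have comp: "compat3 (tern A t) \<theta>" if tt: "ternary_trm ar t" for t
    unfolding compat3_def
  proof (intro allI impI)
    fix x x' y y' z z'
    assume h: "(x,x')\<in>\<theta>" "(y,y')\<in>\<theta>" "(z,z')\<in>\<theta>"
    have wf: "wf_trm ar t" using tt unfolding ternary_trm_def by blast
    have "\<forall>i\<in>vars_trm t. ((\<lambda>i. if i = 0 then x else if i = 1 then y else z) i,
                            (\<lambda>i. if i = 0 then x' else if i = 1 then y' else z') i) \<in> \<theta>"
      using h by auto
    then have "(eval A (\<lambda>i. if i = 0 then x else if i = 1 then y else z) t,
                eval A (\<lambda>i. if i = 0 then x' else if i = 1 then y' else z') t) \<in> \<theta>"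
      by (rule eval_cong[OF cg wf])
    then show "(tern A t x y z, tern A t x' y' z') \<in> \<theta>"
      unfolding tern_def .
  qed
  have "equiv (carrier A) \<theta>" using cg unfolding congruence_def by blast
  then have "\<theta> \<subseteq> carrier A \<times> carrier A" "\<forall>x\<in>carrier A. (x,x)\<in>\<theta>" "sym \<theta>" "trans \<theta>"
    unfolding equiv_def refl_on_def by blast+
  then show ?thesis unfolding cg_def using comp tp tj by blast
qed

lemma tern_closed:
  assumes alg: "algebra ar A" and tt: "ternary_trm ar t"
    and "x\<in>carrier A" "y\<in>carrier A" "z\<in>carrier A"
  shows "tern A t x y z \<in> carrier A"
  unfolding tern_def
  by (rule eval_closed[OF alg]) (use tt assms in \<open>auto simp: ternary_trm_def\<close>)

theorem mainTheorem13:
  fixes ar :: "'f \<Rightarrow> nat" and V :: "('a, 'f) alg set" and n :: nat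
  assumes "n \<ge> 1"
    and "variety ar V"
    and "has_gumm_terms ar V n"
  shows "(\<forall>A\<in>V. \<forall>\<alpha> \<beta> \<gamma>. congruence ar A \<alpha> \<longrightarrow> congruence ar A \<beta> \<longrightarrow> congruence ar A \<gamma> \<longrightarrow>
           \<alpha> \<inter> (\<beta> O \<gamma> O \<beta> O \<gamma> O \<beta>)
             \<subseteq> alt_comp (\<alpha> \<inter> \<beta>) (\<alpha> \<inter> \<gamma>) (4*n - 1) O (\<alpha> \<inter> (\<gamma> O \<beta>))
                 O alt_comp (\<alpha> \<inter> \<gamma>) (\<alpha> \<inter> \<beta>) (2*n))
      \<and> (\<forall>A\<in>V. \<forall>\<alpha> \<beta> \<gamma>. congruence ar A \<alpha> \<longrightarrow> congruence ar A \<beta> \<longrightarrow> congruence ar A \<gamma> \<longrightarrow>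
           \<alpha> \<inter> (\<beta> O (\<alpha> \<inter> \<gamma>) O \<beta> O (\<alpha> \<inter> \<gamma>) O \<beta>)
             \<subseteq> alt_comp (\<alpha> \<inter> \<beta>) (\<alpha> \<inter> \<gamma>) (6*n + 1))"
proof -
  obtain p j where tp: "ternary_trm ar p" and tj: "\<forall>i\<in>{1..n+1}. ternary_trm ar (j i)"
    and ids: "\<forall>A\<in>V. \<forall>x\<in>carrier A. \<forall>y\<in>carrier A. \<forall>z\<in>carrier A.
          (\<forall>i\<in>{1..n+1}. tern A (j i) x y x = x) \<and>
          tern A p x z z = x \<and>
          tern A p x x z = tern A (j 1) x x z \<and>
          (\<forall>i\<in>{1..n}. odd i \<longrightarrow> tern A (j i) x z z = tern A (j (i+1)) x z z) \<and>
          (\<forall>i\<in>{1..n}. even i \<longrightarrow> tern A (j i) x x z = tern A (j (i+1)) x x z) \<and>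
          tern A (j (n+1)) x y z = z"
    using assms(3) unfolding has_gumm_terms_def by blast
  have key: "\<exists>m t. walk (\<alpha>\<inter>\<beta>) (\<alpha>\<inter>\<gamma>) (4*n-1) a m \<and> (m,t) \<in> \<alpha> \<inter> (\<gamma> O \<beta>)
                \<and> walk (\<alpha>\<inter>\<gamma>) (\<alpha>\<inter>\<beta>) (2*n) t f"
    if A: "A\<in>V" and cA: "cg (carrier A) (tern A p) (\<lambda>i. tern A (j i)) n \<alpha>"
      and cB: "cg (carrier A) (tern A p) (\<lambda>i. tern A (j i)) n \<beta>"
      and cG: "cg (carrier A) (tern A p) (\<lambda>i. tern A (j i)) n \<gamma>"
      and h: "(a,f) \<in> \<alpha>" "(a,b)\<in>\<beta>" "(b,c)\<in>\<gamma>" "(c,d)\<in>\<beta>" "(d,e)\<in>\<gamma>" "(e,f)\<in>\<beta>"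
    for A \<alpha> \<beta> \<gamma> a b c d e f
  proof -
    have alg: "algebra ar A" using assms(2) A unfolding variety_def by blast
    have idA: "\<forall>x\<in>carrier A. \<forall>y\<in>carrier A. \<forall>z\<in>carrier A.
          (\<forall>i\<in>{1..n+1}. tern A (j i) x y x = x) \<and>
          tern A p x z z = x \<and>
          tern A p x x z = tern A (j 1) x x z \<and>
          (\<forall>i\<in>{1..n}. odd i \<longrightarrow> tern A (j i) x z z = tern A (j (i+1)) x z z) \<and>
          (\<forall>i\<in>{1..n}. even i \<longrightarrow> tern A (j i) x x z = tern A (j (i+1)) x x z) \<and>
          tern A (j (n+1)) x y z = z" using ids A by blast
    show ?thesis
    proof (rule chain_main[where C="carrier A" and P="tern A p" and J="\<lambda>i. tern A (j i)"])
      show "1 \<le> n" using assms(1) .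
      show "\<And>x y z. x \<in> carrier A \<Longrightarrow> y \<in> carrier A \<Longrightarrow> z \<in> carrier A \<Longrightarrow> tern A p x y z \<in> carrier A"
        using tern_closed[OF alg tp] by blast
      show "\<And>i x y z. i \<in> {1..n + 1} \<Longrightarrow> x \<in> carrier A \<Longrightarrow> y \<in> carrier A \<Longrightarrow> z \<in> carrier A \<Longrightarrow> tern A (j i) x y z \<in> carrier A"
        using tern_closed[OF alg] tj by blast
      show "\<And>i x y. i \<in> {1..n + 1} \<Longrightarrow> x \<in> carrier A \<Longrightarrow> y \<in> carrier A \<Longrightarrow> tern A (j i) x y x = x"
        using idA by blast
      show "\<And>x z. x \<in> carrier A \<Longrightarrow> z \<in> carrier A \<Longrightarrow> tern A p x z z = x"
        using idA by blast
      show "\<And>x z. x \<in> carrier A \<Longrightarrow> z \<in> carrier A \<Longrightarrow> tern A p x x z = tern A (j 1) x x z"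
        using idA by blast
      show "\<And>i x z. i \<in> {1..n} \<Longrightarrow> odd i \<Longrightarrow> x \<in> carrier A \<Longrightarrow> z \<in> carrier A \<Longrightarrow> tern A (j i) x z z = tern A (j (i + 1)) x z z"
        using idA by blast
      show "\<And>i x z. i \<in> {1..n} \<Longrightarrow> even i \<Longrightarrow> x \<in> carrier A \<Longrightarrow> z \<in> carrier A \<Longrightarrow> tern A (j i) x x z = tern A (j (i + 1)) x x z"
        using idA by blast
      show "\<And>x y z. x \<in> carrier A \<Longrightarrow> y \<in> carrier A \<Longrightarrow> z \<in> carrier A \<Longrightarrow> tern A (j (n + 1)) x y z = z"
        using idA by blast
    qed (use cA cB cG h in auto)
  qed
  have part1: "\<forall>A\<in>V. \<forall>\<alpha> \<beta> \<gamma>. congruence ar A \<alpha> \<longrightarrow> congruence ar A \<beta> \<longrightarrow> congruence ar A \<gamma> \<longrightarrow>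
           \<alpha> \<inter> (\<beta> O \<gamma> O \<beta> O \<gamma> O \<beta>)
             \<subseteq> alt_comp (\<alpha> \<inter> \<beta>) (\<alpha> \<inter> \<gamma>) (4*n - 1) O (\<alpha> \<inter> (\<gamma> O \<beta>))
                 O alt_comp (\<alpha> \<inter> \<gamma>) (\<alpha> \<inter> \<beta>) (2*n)"
  proof (intro ballI allI impI subsetI)
    fix A \<alpha> \<beta> \<gamma> x
    assume A: "A\<in>V" and ca: "congruence ar A \<alpha>" and cb: "congruence ar A \<beta>" and cc: "congruence ar A \<gamma>"
      and x: "x \<in> \<alpha> \<inter> (\<beta> O \<gamma> O \<beta> O \<gamma> O \<beta>)"
    have alg: "algebra ar A" using assms(2) A unfolding variety_def by blast
    obtain a f where xf: "x = (a,f)" by (cases x)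
    obtain b c d e where h: "(a,f) \<in> \<alpha>" "(a,b)\<in>\<beta>" "(b,c)\<in>\<gamma>" "(c,d)\<in>\<beta>" "(d,e)\<in>\<gamma>" "(e,f)\<in>\<beta>"
      using x xf by blast
    obtain m t where w: "walk (\<alpha>\<inter>\<beta>) (\<alpha>\<inter>\<gamma>) (4*n-1) a m" "(m,t) \<in> \<alpha> \<inter> (\<gamma> O \<beta>)"
        "walk (\<alpha>\<inter>\<gamma>) (\<alpha>\<inter>\<beta>) (2*n) t f"
      using key[OF A cong_cg[OF alg ca tp tj] cong_cg[OF alg cb tp tj] cong_cg[OF alg cc tp tj] h] by blast
    show "x \<in> alt_comp (\<alpha> \<inter> \<beta>) (\<alpha> \<inter> \<gamma>) (4*n - 1) O (\<alpha> \<inter> (\<gamma> O \<beta>)) O alt_comp (\<alpha> \<inter> \<gamma>) (\<alpha> \<inter> \<beta>) (2*n)"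
      using walk_alt[OF w(1)] w(2) walk_alt[OF w(3)] xf by blast
  qed
  have part2: "\<forall>A\<in>V. \<forall>\<alpha> \<beta> \<gamma>. congruence ar A \<alpha> \<longrightarrow> congruence ar A \<beta> \<longrightarrow> congruence ar A \<gamma> \<longrightarrow>
           \<alpha> \<inter> (\<beta> O (\<alpha> \<inter> \<gamma>) O \<beta> O (\<alpha> \<inter> \<gamma>) O \<beta>)
             \<subseteq> alt_comp (\<alpha> \<inter> \<beta>) (\<alpha> \<inter> \<gamma>) (6*n + 1)"
  proof (intro ballI allI impI subsetI)
    fix A \<alpha> \<beta> \<gamma> x
    assume A: "A\<in>V" and ca: "congruence ar A \<alpha>" and cb: "congruence ar A \<beta>" and cc: "congruence ar A \<gamma>"
      and x: "x \<in> \<alpha> \<inter> (\<beta> O (\<alpha> \<inter> \<gamma>) O \<beta> O (\<alpha> \<inter> \<gamma>) O \<beta>)"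
    have alg: "algebra ar A" using assms(2) A unfolding variety_def by blast
    obtain a f where xf: "x = (a,f)" by (cases x)
    obtain b c d e where h: "(a,f) \<in> \<alpha>" "(a,b)\<in>\<beta>" "(b,c)\<in>\<alpha>\<inter>\<gamma>" "(c,d)\<in>\<beta>" "(d,e)\<in>\<alpha>\<inter>\<gamma>" "(e,f)\<in>\<beta>"
      using x xf by blast
    have cA: "cg (carrier A) (tern A p) (\<lambda>i. tern A (j i)) n \<alpha>" using cong_cg[OF alg ca tp tj] .
    have cAG: "cg (carrier A) (tern A p) (\<lambda>i. tern A (j i)) n (\<alpha>\<inter>\<gamma>)"
      using cg_inter[OF cA cong_cg[OF alg cc tp tj]] .
    obtain m t where w: "walk (\<alpha>\<inter>\<beta>) (\<alpha>\<inter>(\<alpha>\<inter>\<gamma>)) (4*n-1) a m" "(m,t) \<in> \<alpha> \<inter> ((\<alpha>\<inter>\<gamma>) O \<beta>)"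
        "walk (\<alpha>\<inter>(\<alpha>\<inter>\<gamma>)) (\<alpha>\<inter>\<beta>) (2*n) t f"
      using key[OF A cA cong_cg[OF alg cb tp tj] cAG h] by blast
    have ee: "\<alpha>\<inter>(\<alpha>\<inter>\<gamma>) = \<alpha>\<inter>\<gamma>" by blast
    have w1: "walk (\<alpha>\<inter>\<beta>) (\<alpha>\<inter>\<gamma>) (4*n-1) a m" using w(1) unfolding ee .
    have w3: "walk (\<alpha>\<inter>\<gamma>) (\<alpha>\<inter>\<beta>) (2*n) t f" using w(3) unfolding ee .
    obtain y where y: "(m,y) \<in> \<alpha>\<inter>\<gamma>" "(y,t) \<in> \<beta>" "(m,t) \<in> \<alpha>" using w(2) by blast
    have sa: "sym \<alpha>" "trans \<alpha>" using ca unfolding congruence_def equiv_def by blast+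
    have "(y,m) \<in> \<alpha>" using y(1) sa(1) by (meson IntD1 symD)
    then have yt: "(y,t) \<in> \<alpha>\<inter>\<beta>" using y sa(2) by (meson IntI transD)
    have odd1: "odd (4*n-1)" using assms(1) by presburger
    have w4: "walk (\<alpha>\<inter>\<beta>) (\<alpha>\<inter>\<gamma>) (Suc (4*n-1)) a y"
      by (rule walk_snoc[OF w1]) (use odd1 y(1) in simp)
    have ev: "even (Suc (4*n-1))" using odd1 by simp
    have w5: "walk (\<alpha>\<inter>\<beta>) (\<alpha>\<inter>\<gamma>) (Suc (Suc (4*n-1))) a t"
      by (rule walk_snoc[OF w4]) (use ev yt in simp)
    have odd2: "odd (Suc (Suc (4*n-1)))" using odd1 by simp
    have w6: "walk (\<alpha>\<inter>\<beta>) (\<alpha>\<inter>\<gamma>) (Suc (Suc (4*n-1)) + 2*n) a f"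
      by (rule walk_concat[OF w5]) (use odd2 w3 in simp)
    have "Suc (Suc (4*n-1)) + 2*n = 6*n+1" using assms(1) by simp
    then show "x \<in> alt_comp (\<alpha> \<inter> \<beta>) (\<alpha> \<inter> \<gamma>) (6*n + 1)"
      using walk_alt[OF w6] xf by simp
  qed
  show ?thesis using part1 part2 by blast
qed

end
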